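(* Let $T\ge1$, $K_0=\{x_0\}$, $K_1,\dots,K_T\subseteq\mathbb R$ closed with $\mathrm{card}(K_{t+1})\ge\mathrm{card}(K_t)$ for $t=0,\dots,T-1$, $\Omega=K_0\times\dots\times K_T$. Let $\mathcal E_t\subseteq C_t$ be vector subspaces with $X_t\in\mathcal E_t$ and $\mathcal E_t+\mathbb R=\mathcal E_t$, and $\mathcal E=\mathcal E_0\times\dots\times\mathcal E_T$. If $\varphi,\psi\in\mathcal E$ and $\Delta\in\mathcal H$ satisfy $\sum_{t=0}^T\varphi_t=\sum_{t=0}^T\psi_t+I^\Delta$ on $\Omega$, then there exist constants $k_0,\dots,k_T,h_0,\dots,h_T\in\mathbb R$ with $\psi_t(x_t)=\varphi_t(x_t)+k_tx_t+h_t$ for all $x_t\in K_t$, $t=0,\dots,T$. In particular, if $S_t:\mathcal E_t\to\mathbb R$ ($t=0,\dots,T$) are stock additive, then $\sum_tS_t(\varphi_t)=\sum_tS_t(\psi_t)$, and on $\mathcal V=\mathcal E_0+\dots+\mathcal E_T+\mathcal I$ the map $v=\sum_t\varphi_t+I^\Delta\mapsto S(v):=\sum_tS_t(\varphi_t)$ is well defined, cash additive and integral additive.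
   Context: $X_t(x_t)=x_t$. $C_t$: continuous $\phi:K_t\to\mathbb R$ with $\sup|\phi(x_t)|/(1+|x_t|)<\infty$, regarded as functions on $\Omega$. $\mathcal H$: $\Delta=(\Delta_0,\dots,\Delta_{T-1})$ with $\Delta_t$ bounded continuous on $K_0\times\dots\times K_t$; $I^\Delta(x)=\sum_{t=0}^{T-1}\Delta_t(x_0,\dots,x_t)(x_{t+1}-x_t)$; $\mathcal I=\{I^\Delta:\Delta\in\mathcal H\}$. $p_t:\mathcal E_t\to\mathbb R$ is stock additive if $p_t(0)=0$ and $p_t(\varphi_t+\alpha X_t+\beta)=p_t(\varphi_t)+\alpha x_0+\beta$ for all $\varphi_t\in\mathcal E_t$, $\alpha,\beta\in\mathbb R$. $S$ is cash additive if $S(v+k)=S(v)+k$ for $k\in\mathbb R$, and integral additive if $S(v+I^\Delta)=S(v)$ for all $\Delta\in\mathcal H$. *)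

theory Defs
  imports "HOL-Analysis.Analysis" "HOL-Library.Equipollence"
begin

text \<open>Functions on K_t are represented extensionally (value undefined outside K_t).\<close>

definition Cspace :: "real set \<Rightarrow> (real \<Rightarrow> real) set" where
  "Cspace A = {\<phi>. \<phi> \<in> extensional A \<and> continuous_on A \<phi> \<and>
                   (\<exists>c. \<forall>x\<in>A. \<bar>\<phi> x\<bar> \<le> c * (1 + \<bar>x\<bar>))}"

definition Xfun :: "real set \<Rightarrow> real \<Rightarrow> real" where
  "Xfun A = (\<lambda>x\<in>A. x)"

definition constfun :: "real set \<Rightarrow> real \<Rightarrow> real \<Rightarrow> real" where
  "constfun A c = (\<lambda>x\<in>A. c)"

definition is_subspace_on :: "real set \<Rightarrow> (real \<Rightarrow> real) set \<Rightarrow> bool" where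
  "is_subspace_on A E \<longleftrightarrow> constfun A 0 \<in> E \<and>
     (\<forall>\<phi>\<in>E. \<forall>\<psi>\<in>E. (\<lambda>x\<in>A. \<phi> x + \<psi> x) \<in> E) \<and>
     (\<forall>\<phi>\<in>E. \<forall>a::real. (\<lambda>x\<in>A. a * \<phi> x) \<in> E)"

definition admissible_space :: "real set \<Rightarrow> (real \<Rightarrow> real) set \<Rightarrow> bool" where
  "admissible_space A E \<longleftrightarrow> E \<subseteq> Cspace A \<and> is_subspace_on A E \<and> Xfun A \<in> E \<and>
     (\<forall>\<phi>\<in>E. \<forall>c::real. (\<lambda>x\<in>A. \<phi> x + c) \<in> E)"

definition Omega :: "nat \<Rightarrow> (nat \<Rightarrow> real set) \<Rightarrow> (nat \<Rightarrow> real) set" where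
  "Omega T K = PiE {..T} K"

text \<open>Trading strategies: \<Delta> t is a bounded continuous function on K_0 x ... x K_t
  (product topology), applied to the restricted path (x_0,...,x_t).\<close>
definition Hstrat :: "nat \<Rightarrow> (nat \<Rightarrow> real set) \<Rightarrow> (nat \<Rightarrow> (nat \<Rightarrow> real) \<Rightarrow> real) set" where
  "Hstrat T K = {\<Delta>. \<forall>t<T. continuous_on (PiE {..t} K) (\<Delta> t) \<and> bounded (\<Delta> t ` PiE {..t} K)}"

definition Iint :: "nat \<Rightarrow> (nat \<Rightarrow> (nat \<Rightarrow> real) \<Rightarrow> real) \<Rightarrow> (nat \<Rightarrow> real) \<Rightarrow> real" where
  "Iint T \<Delta> x = (\<Sum>t<T. \<Delta> t (restrict x {..t}) * (x (Suc t) - x t))"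

definition stock_additive ::
  "real set \<Rightarrow> real \<Rightarrow> (real \<Rightarrow> real) set \<Rightarrow> ((real \<Rightarrow> real) \<Rightarrow> real) \<Rightarrow> bool" where
  "stock_additive A x0 E p \<longleftrightarrow> p (constfun A 0) = 0 \<and>
     (\<forall>\<phi>\<in>E. \<forall>\<alpha> \<beta>::real. p (\<lambda>x\<in>A. \<phi> x + \<alpha> * x + \<beta>) = p \<phi> + \<alpha> * x0 + \<beta>)"

definition Vspace :: "nat \<Rightarrow> (nat \<Rightarrow> real set) \<Rightarrow> (nat \<Rightarrow> (real \<Rightarrow> real) set) \<Rightarrow> ((nat \<Rightarrow> real) \<Rightarrow> real) set" where
  "Vspace T K E = {v. \<exists>\<phi> \<Delta>. (\<forall>t\<le>T. \<phi> t \<in> E t) \<and> \<Delta> \<in> Hstrat T K \<and>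
       v = (\<lambda>x\<in>Omega T K. (\<Sum>t\<le>T. \<phi> t (x t)) + Iint T \<Delta> x)}"

end

theory Submission
  imports Defs
begin

lemma lepoll_chain:
  assumes "\<forall>t<n. A t \<lesssim> A (Suc t)" "s \<le> n"
  shows "A s \<lesssim> A n"
  using assms
proof (induction n)
  case 0 then show ?case by simp
next
  case (Suc n)
  show ?case
  proof (cases "s = Suc n")
    case True then show ?thesis by simp
  next
    case False
    then have "A s \<lesssim> A n" using Suc by auto
    then show ?thesis using Suc.prems(1) lepoll_trans by blast
  qed
qed

lemma ext_path:
  assumes "p \<in> PiE {..T} K" "y \<in> K (Suc T)"
  shows "p(Suc T := y) \<in> PiE {..Suc T} K"
  using assms by (auto simp: PiE_def extensional_def Pi_def le_Suc_eq)

lemma Iint_ext: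
  assumes "p \<in> PiE {..T} K"
  shows "Iint (Suc T) \<Delta> (p(Suc T := y)) = Iint T \<Delta> p + \<Delta> T p * (y - p T)"
proof -
  have r: "restrict (p(Suc T := y)) {..t} = restrict p {..t}" if "t \<le> T" for t
    using that by (auto simp: restrict_def)
  have "Iint T \<Delta> (p(Suc T := y)) = Iint T \<Delta> p"
    unfolding Iint_def by (rule sum.cong) (auto simp: r)
  moreover have "restrict (p(Suc T := y)) {..T} = p"
    using r[of T] assms by simp
  ultimately show ?thesis
    by (simp add: Iint_def)
qed

lemma core:
  fixes K :: "nat \<Rightarrow> real set" and f :: "nat \<Rightarrow> real \<Rightarrow> real"
  assumes "\<forall>t\<le>T. K t \<noteq> {}" "\<forall>t<T. K t \<lesssim> K (Suc t)"
    "\<forall>x\<in>PiE {..T} K. (\<Sum>t\<le>T. f t (x t)) = Iint T \<Delta> x"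
  shows "\<exists>k h. (\<forall>t\<le>T. \<forall>y\<in>K t. f t y = k t * y + h t) \<and>
     ((\<forall>t\<le>T. K t = {x0} \<or> (\<exists>c\<in>K t. \<exists>d\<in>K t. c \<noteq> d)) \<longrightarrow> (\<Sum>t\<le>T. k t * x0 + h t) = 0)"
  using assms
proof (induction T arbitrary: f)
  case 0
  have "f 0 y = 0" if "y \<in> K 0" for y
  proof -
    have "(\<lambda>t\<in>{..0::nat}. y) \<in> PiE {..0} K" using that by auto
    from "0.prems"(3)[rule_format, OF this] show ?thesis by (simp add: Iint_def)
  qed
  then show ?case by (intro exI[of _ "\<lambda>_. 0"]) auto
next
  case (Suc T)
  note prems = Suc.prems
  show ?case
  proof (cases "\<exists>c\<in>K (Suc T). \<exists>d\<in>K (Suc T). c \<noteq> d")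
    case True
    then obtain c d where cd: "c \<in> K (Suc T)" "d \<in> K (Suc T)" "c \<noteq> d" by blast
    define a where "a = (f (Suc T) c - f (Suc T) d) / (c - d)"
    have eqp: "(\<Sum>t\<le>T. f t (p t)) + f (Suc T) y = Iint T \<Delta> p + \<Delta> T p * (y - p T)"
      if "p \<in> PiE {..T} K" "y \<in> K (Suc T)" for p y
    proof -
      have m: "p(Suc T := y) \<in> PiE {..Suc T} K" using ext_path that .
      have "(\<Sum>t\<le>Suc T. f t ((p(Suc T := y)) t)) = (\<Sum>t\<le>T. f t (p t)) + f (Suc T) y"
        by (simp add: sum.atMost_Suc)
      then show ?thesis using prems(3)[rule_format, OF m] Iint_ext[OF that(1)] by simp
    qed
    have Dc: "\<Delta> T p = a" if "p \<in> PiE {..T} K" for p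
    proof -
      have "f (Suc T) c - f (Suc T) d = \<Delta> T p * (c - d)"
        using eqp[OF that cd(1)] eqp[OF that cd(2)] by (simp add: algebra_simps)
      then show ?thesis using cd(3) by (simp add: a_def)
    qed
    have "PiE {..T} K \<noteq> {}" using prems(1) by (simp add: PiE_eq_empty_iff)
    then obtain p0 where p0: "p0 \<in> PiE {..T} K" by blast
    define b where "b = f (Suc T) c - a * c"
    have fS: "f (Suc T) y = a * y + b" if "y \<in> K (Suc T)" for y
    proof -
      have "f (Suc T) y - f (Suc T) c = a * (y - c)"
        using eqp[OF p0 that] eqp[OF p0 cd(1)] Dc[OF p0] by (simp add: algebra_simps)
      then show ?thesis by (simp add: b_def algebra_simps)
    qed
    define f' where "f' = f(T := (\<lambda>y. f T y + a * y + b))"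
    have "\<forall>x\<in>PiE {..T} K. (\<Sum>t\<le>T. f' t (x t)) = Iint T \<Delta> x"
    proof
      fix p assume p: "p \<in> PiE {..T} K"
      have "(\<Sum>t\<le>T. f' t (p t)) = (\<Sum>t\<le>T. f t (p t) + (if t = T then a * p T + b else 0))"
        by (rule sum.cong) (auto simp: f'_def)
      also have "\<dots> = (\<Sum>t\<le>T. f t (p t)) + (a * p T + b)"
        by (simp add: sum.distrib)
      also have "\<dots> = Iint T \<Delta> p"
        using eqp[OF p cd(1)] Dc[OF p] fS[OF cd(1)] by (simp add: algebra_simps)
      finally show "(\<Sum>t\<le>T. f' t (p t)) = Iint T \<Delta> p" .
    qed
    then obtain k' h' where kh': "\<forall>t\<le>T. \<forall>y\<in>K t. f' t y = k' t * y + h' t"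
      "(\<forall>t\<le>T. K t = {x0} \<or> (\<exists>c\<in>K t. \<exists>d\<in>K t. c \<noteq> d)) \<longrightarrow> (\<Sum>t\<le>T. k' t * x0 + h' t) = 0"
      using Suc.IH[of f'] prems by auto
    define k where "k = k'(T := k' T - a, Suc T := a)"
    define h where "h = h'(T := h' T - b, Suc T := b)"
    show ?thesis
    proof (intro exI conjI impI allI ballI)
      fix t y assume t: "t \<le> Suc T" and y: "y \<in> K t"
      show "f t y = k t * y + h t"
      proof (cases "t = Suc T")
        case True then show ?thesis using fS y by (simp add: k_def h_def)
      next
        case False
        then have tT: "t \<le> T" using t by simp
        have "f' t y = k' t * y + h' t" using kh'(1) tT y by blast
        then show ?thesis
          using False by (cases "t = T") (auto simp: f'_def k_def h_def algebra_simps)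
      qed
    next
      assume H: "\<forall>t\<le>Suc T. K t = {x0} \<or> (\<exists>c\<in>K t. \<exists>d\<in>K t. c \<noteq> d)"
      then have s0: "(\<Sum>t\<le>T. k' t * x0 + h' t) = 0" using kh'(2) by auto
      have "(\<Sum>t\<le>T. k t * x0 + h t) = (\<Sum>t\<le>T. (k' t * x0 + h' t) + (if t = T then - (a * x0 + b) else 0))"
        by (rule sum.cong) (auto simp: k_def h_def algebra_simps)
      also have "\<dots> = - (a * x0 + b)" using s0 by (simp add: sum.distrib)
      finally show "(\<Sum>t\<le>Suc T. k t * x0 + h t) = 0"
        by (simp add: sum.atMost_Suc k_def h_def)
    qed
  next
    case False
    then have sub: "\<forall>y\<in>K (Suc T). \<forall>z\<in>K (Suc T). y = z" by blast
    have subt: "\<forall>y\<in>K t. \<forall>z\<in>K t. y = z" if "t \<le> Suc T" for t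
    proof -
      have "K t \<lesssim> K (Suc T)" using lepoll_chain[OF prems(2) that] .
      then obtain g where g: "inj_on g (K t)" "g ` K t \<subseteq> K (Suc T)" by (auto simp: lepoll_def)
      show ?thesis using sub g by (auto simp: inj_on_def image_subset_iff)
    qed
    define h where "h t = f t (SOME y. y \<in> K t)" for t
    have A: "\<forall>t\<le>Suc T. \<forall>y\<in>K t. f t y = 0 * y + h t"
    proof (intro allI impI ballI)
      fix t y assume t: "t \<le> Suc T" and y: "y \<in> K t"
      have "(SOME y. y \<in> K t) \<in> K t" using y by (rule someI)
      then have "f t y = h t" using subt[OF t] y unfolding h_def by metis
      then show "f t y = 0 * y + h t" by simp
    qed
    have B: "(\<forall>t\<le>Suc T. K t = {x0} \<or> (\<exists>c\<in>K t. \<exists>d\<in>K t. c \<noteq> d)) \<longrightarrow> (\<Sum>t\<le>Suc T. 0 * x0 + h t) = 0"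
    proof
      assume H: "\<forall>t\<le>Suc T. K t = {x0} \<or> (\<exists>c\<in>K t. \<exists>d\<in>K t. c \<noteq> d)"
      have Kx: "K t = {x0}" if "t \<le> Suc T" for t using H subt that by blast
      define x where "x = (\<lambda>t\<in>{..Suc T}. x0)"
      have xm: "x \<in> PiE {..Suc T} K" using Kx by (auto simp: x_def)
      have "Iint (Suc T) \<Delta> x = 0" unfolding Iint_def x_def by (rule sum.neutral) auto
      then have "(\<Sum>t\<le>Suc T. f t (x t)) = 0" using prems(3) xm by auto
      moreover have "(\<Sum>t\<le>Suc T. f t (x t)) = (\<Sum>t\<le>Suc T. 0 * x0 + h t)"
        by (rule sum.cong) (auto simp: x_def h_def Kx)
      ultimately show "(\<Sum>t\<le>Suc T. 0 * x0 + h t) = 0" by simp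
    qed
    show ?thesis apply (rule exI[of _ "\<lambda>_. 0::real"], rule exI[of _ h]) using A B apply simp done
  qed
qed


lemma K_nonempty:
  assumes K0: "K 0 = {x0}" and Kcard: "\<forall>t<T. K t \<lesssim> K (Suc t)"
  shows "\<forall>t\<le>T. K t \<noteq> {}"
proof (intro allI impI)
  fix t assume "t \<le> T"
  have "K 0 \<lesssim> K t" using lepoll_chain[of t K 0] Kcard \<open>t \<le> T\<close> by auto
  then obtain g where "g ` K 0 \<subseteq> K t" by (auto simp: lepoll_def)
  then show "K t \<noteq> {}" using K0 by auto
qed

lemma affine_part:
  fixes \<phi> \<psi> :: "nat \<Rightarrow> real \<Rightarrow> real"
  assumes K0: "K 0 = {x0}" and Kcard: "\<forall>t<T. K t \<lesssim> K (Suc t)"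
    and eq: "\<forall>x\<in>Omega T K. (\<Sum>t\<le>T. \<phi> t (x t)) = (\<Sum>t\<le>T. \<psi> t (x t)) + Iint T \<Delta> x"
  shows "\<exists>k h. (\<forall>t\<le>T. \<forall>y\<in>K t. \<phi> t y - \<psi> t y = k t * y + h t) \<and>
     ((\<forall>t\<le>T. K t = {x0} \<or> (\<exists>c\<in>K t. \<exists>d\<in>K t. c \<noteq> d)) \<longrightarrow> (\<Sum>t\<le>T. k t * x0 + h t) = 0)"
proof -
  have "\<forall>x\<in>PiE {..T} K. (\<Sum>t\<le>T. (\<lambda>t y. \<phi> t y - \<psi> t y) t (x t)) = Iint T \<Delta> x"
    using eq by (simp add: Omega_def sum_subtractf)
  from core[OF K_nonempty[OF K0 Kcard] Kcard this, of x0] show ?thesis by simp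
qed

lemma key:
  fixes \<phi> \<psi> :: "nat \<Rightarrow> real \<Rightarrow> real"
  assumes K0: "K 0 = {x0}" and Kcard: "\<forall>t<T. K t \<lesssim> K (Suc t)"
    and Eadm: "\<forall>t\<le>T. admissible_space (K t) (E t)"
    and \<phi>E: "\<forall>t\<le>T. \<phi> t \<in> E t"
    and \<psi>E: "\<forall>t\<le>T. \<psi> t \<in> E t"
    and eq: "\<forall>x\<in>Omega T K. (\<Sum>t\<le>T. \<phi> t (x t)) = (\<Sum>t\<le>T. \<psi> t (x t)) + Iint T \<Delta> x"
    and SA: "\<forall>t\<le>T. stock_additive (K t) x0 (E t) (S t)"
  shows "(\<Sum>t\<le>T. S t (\<phi> t)) = (\<Sum>t\<le>T. S t (\<psi> t))"
proof -
  obtain k h where kh: "\<forall>t\<le>T. \<forall>y\<in>K t. \<phi> t y - \<psi> t y = k t * y + h t"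
    "(\<forall>t\<le>T. K t = {x0} \<or> (\<exists>c\<in>K t. \<exists>d\<in>K t. c \<noteq> d)) \<longrightarrow> (\<Sum>t\<le>T. k t * x0 + h t) = 0"
    using affine_part[OF K0 Kcard eq] by blast
  have ne: "\<forall>t\<le>T. K t \<noteq> {}" using K_nonempty[OF K0 Kcard] .
  have extE: "f \<in> extensional (K t)" if "t \<le> T" "f \<in> E t" for t f
    using Eadm that by (auto simp: admissible_space_def Cspace_def)
  have SAt: "\<forall>f\<in>E t. \<forall>\<alpha> \<beta>. S t (\<lambda>x\<in>K t. f x + \<alpha> * x + \<beta>) = S t f + \<alpha> * x0 + \<beta>"
    if "t \<le> T" for t using SA that unfolding stock_additive_def by simp
  have cls: "K t = {x0} \<or> (\<exists>c\<in>K t. \<exists>d\<in>K t. c \<noteq> d)" if t: "t \<le> T" for t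
  proof (cases "\<exists>c\<in>K t. \<exists>d\<in>K t. c \<noteq> d")
    case False
    obtain y where y: "y \<in> K t" using ne t by blast
    then have Ky: "K t = {y}" using False by blast
    have "(\<lambda>x\<in>K t. \<phi> t x + 1 * x + (- y)) = \<phi> t"
    proof
      fix x show "(\<lambda>x\<in>K t. \<phi> t x + 1 * x + (- y)) x = \<phi> t x"
      proof (cases "x \<in> K t")
        case True then show ?thesis using Ky by simp
      next
        case False then show ?thesis using extensional_arb[OF extE[OF t \<phi>E[rule_format, OF t]] False] by simp
      qed
    qed
    moreover have "S t (\<lambda>x\<in>K t. \<phi> t x + 1 * x + (- y)) = S t (\<phi> t) + 1 * x0 + (- y)"
      using SAt[OF t, rule_format, OF \<phi>E[rule_format, OF t]] .
    ultimately have "x0 = y" by simp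
    then show ?thesis using Ky by simp
  qed simp
  have s0: "(\<Sum>t\<le>T. k t * x0 + h t) = 0" using kh(2) cls by blast
  have Seq: "S t (\<psi> t) = S t (\<phi> t) + (- k t) * x0 + (- h t)" if t: "t \<le> T" for t
  proof -
    have "\<psi> t = (\<lambda>x\<in>K t. \<phi> t x + (- k t) * x + (- h t))"
    proof
      fix x show "\<psi> t x = (\<lambda>x\<in>K t. \<phi> t x + (- k t) * x + (- h t)) x"
      proof (cases "x \<in> K t")
        case True then show ?thesis using kh(1) t by (simp add: algebra_simps)
      next
        case False then show ?thesis using extensional_arb[OF extE[OF t \<psi>E[rule_format, OF t]] False] by simp
      qed
    qed
    then show ?thesis using SAt[OF t, rule_format, OF \<phi>E[rule_format, OF t], of "- k t" "- h t"] by simp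
  qed
  have "(\<Sum>t\<le>T. S t (\<psi> t)) = (\<Sum>t\<le>T. S t (\<phi> t) - (k t * x0 + h t))"
    by (rule sum.cong) (auto simp: Seq)
  also have "\<dots> = (\<Sum>t\<le>T. S t (\<phi> t))" using s0 by (simp add: sum_subtractf)
  finally show ?thesis by simp
qed


lemma Hstrat_add:
  assumes "\<Delta>1 \<in> Hstrat T K" "\<Delta>2 \<in> Hstrat T K"
  shows "(\<lambda>t y. \<Delta>1 t y + \<Delta>2 t y) \<in> Hstrat T K"
  unfolding Hstrat_def
proof (intro CollectI allI impI conjI)
  fix t assume t: "t < T"
  have c: "continuous_on (PiE {..t} K) (\<Delta>1 t)" "continuous_on (PiE {..t} K) (\<Delta>2 t)"
    and b: "bounded (\<Delta>1 t ` PiE {..t} K)" "bounded (\<Delta>2 t ` PiE {..t} K)"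
    using assms t unfolding Hstrat_def by auto
  show "continuous_on (PiE {..t} K) (\<lambda>y. \<Delta>1 t y + \<Delta>2 t y)"
    using c by (intro continuous_on_add)
  have "(\<lambda>y. \<Delta>1 t y + \<Delta>2 t y) ` PiE {..t} K \<subseteq>
        (\<lambda>(x,y). x + y) ` (\<Delta>1 t ` PiE {..t} K \<times> \<Delta>2 t ` PiE {..t} K)"
    by auto
  then show "bounded ((\<lambda>y. \<Delta>1 t y + \<Delta>2 t y) ` PiE {..t} K)"
    using bounded_plus[OF b] bounded_subset by blast
qed

lemma Iint_add: "Iint T (\<lambda>t y. \<Delta>1 t y + \<Delta>2 t y) x = Iint T \<Delta>1 x + Iint T \<Delta>2 x"
  unfolding Iint_def by (simp add: sum.distrib distrib_right)

lemma Iint_diff: "Iint T (\<lambda>t y. \<Delta>1 t y - \<Delta>2 t y) x = Iint T \<Delta>1 x - Iint T \<Delta>2 x"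
  unfolding Iint_def by (simp add: sum_subtractf left_diff_distrib)


theorem lemmaA2:
  fixes T :: nat and x0 :: real and K :: "nat \<Rightarrow> real set"
    and E :: "nat \<Rightarrow> (real \<Rightarrow> real) set"
    and \<phi> \<psi> :: "nat \<Rightarrow> real \<Rightarrow> real"
    and \<Delta> :: "nat \<Rightarrow> (nat \<Rightarrow> real) \<Rightarrow> real"
  assumes T1: "T \<ge> 1"
    and K0: "K 0 = {x0}"
    and Kclosed: "\<forall>t\<in>{1..T}. closed (K t)"
    and Kcard: "\<forall>t<T. K t \<lesssim> K (Suc t)"
    and Eadm: "\<forall>t\<le>T. admissible_space (K t) (E t)"
    and \<phi>E: "\<forall>t\<le>T. \<phi> t \<in> E t"
    and \<psi>E: "\<forall>t\<le>T. \<psi> t \<in> E t"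
    and \<Delta>H: "\<Delta> \<in> Hstrat T K"
    and eq: "\<forall>x\<in>Omega T K. (\<Sum>t\<le>T. \<phi> t (x t)) = (\<Sum>t\<le>T. \<psi> t (x t)) + Iint T \<Delta> x"
  shows "(\<exists>k h :: nat \<Rightarrow> real. \<forall>t\<le>T. \<forall>y\<in>K t. \<psi> t y = \<phi> t y + k t * y + h t)
    \<and> (\<forall>S :: nat \<Rightarrow> (real \<Rightarrow> real) \<Rightarrow> real.
          (\<forall>t\<le>T. stock_additive (K t) x0 (E t) (S t)) \<longrightarrow>
          (\<Sum>t\<le>T. S t (\<phi> t)) = (\<Sum>t\<le>T. S t (\<psi> t))
          \<and> (\<exists>SV :: ((nat \<Rightarrow> real) \<Rightarrow> real) \<Rightarrow> real.
               (\<forall>\<phi>' \<Delta>'. (\<forall>t\<le>T. \<phi>' t \<in> E t) \<and> \<Delta>' \<in> Hstrat T K \<longrightarrow>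
                  SV (\<lambda>x\<in>Omega T K. (\<Sum>t\<le>T. \<phi>' t (x t)) + Iint T \<Delta>' x) = (\<Sum>t\<le>T. S t (\<phi>' t)))
             \<and> (\<forall>v\<in>Vspace T K E. \<forall>c::real. SV (\<lambda>x\<in>Omega T K. v x + c) = SV v + c)
             \<and> (\<forall>v\<in>Vspace T K E. \<forall>\<Delta>'\<in>Hstrat T K. SV (\<lambda>x\<in>Omega T K. v x + Iint T \<Delta>' x) = SV v)))"
proof -
  have part1: "\<exists>k h :: nat \<Rightarrow> real. \<forall>t\<le>T. \<forall>y\<in>K t. \<psi> t y = \<phi> t y + k t * y + h t"
  proof -
    obtain k h where kh: "\<forall>t\<le>T. \<forall>y\<in>K t. \<phi> t y - \<psi> t y = k t * y + h t"
      using affine_part[OF K0 Kcard eq] by blast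
    show ?thesis
      by (rule exI[of _ "\<lambda>t. - k t"], rule exI[of _ "\<lambda>t. - h t"]) (use kh in \<open>auto simp: algebra_simps\<close>)
  qed
  have part2: "(\<Sum>t\<le>T. S t (\<phi> t)) = (\<Sum>t\<le>T. S t (\<psi> t))
          \<and> (\<exists>SV :: ((nat \<Rightarrow> real) \<Rightarrow> real) \<Rightarrow> real.
               (\<forall>\<phi>' \<Delta>'. (\<forall>t\<le>T. \<phi>' t \<in> E t) \<and> \<Delta>' \<in> Hstrat T K \<longrightarrow>
                  SV (\<lambda>x\<in>Omega T K. (\<Sum>t\<le>T. \<phi>' t (x t)) + Iint T \<Delta>' x) = (\<Sum>t\<le>T. S t (\<phi>' t)))
             \<and> (\<forall>v\<in>Vspace T K E. \<forall>c::real. SV (\<lambda>x\<in>Omega T K. v x + c) = SV v + c)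
             \<and> (\<forall>v\<in>Vspace T K E. \<forall>\<Delta>'\<in>Hstrat T K. SV (\<lambda>x\<in>Omega T K. v x + Iint T \<Delta>' x) = SV v))"
    if SA: "\<forall>t\<le>T. stock_additive (K t) x0 (E t) (S t)" for S
  proof -
    let ?R = "\<lambda>\<phi>' \<Delta>'. (\<lambda>x\<in>Omega T K. (\<Sum>t\<le>T. \<phi>' t (x t)) + Iint T \<Delta>' x)"
    define SV where "SV v = (SOME r. \<exists>\<phi>' \<Delta>'. (\<forall>t\<le>T. \<phi>' t \<in> E t) \<and> \<Delta>' \<in> Hstrat T K \<and>
       v = ?R \<phi>' \<Delta>' \<and> r = (\<Sum>t\<le>T. S t (\<phi>' t)))" for v
    have P1: "SV (?R \<phi>' \<Delta>') = (\<Sum>t\<le>T. S t (\<phi>' t))"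
      if \<phi>'E: "\<forall>t\<le>T. \<phi>' t \<in> E t" and \<Delta>'H: "\<Delta>' \<in> Hstrat T K" for \<phi>' \<Delta>'
    proof -
      let ?P = "\<lambda>r. \<exists>\<phi>'' \<Delta>''. (\<forall>t\<le>T. \<phi>'' t \<in> E t) \<and> \<Delta>'' \<in> Hstrat T K \<and>
         ?R \<phi>' \<Delta>' = ?R \<phi>'' \<Delta>'' \<and> r = (\<Sum>t\<le>T. S t (\<phi>'' t))"
      have p0: "?P (\<Sum>t\<le>T. S t (\<phi>' t))"
        by (rule exI[of _ \<phi>'], rule exI[of _ \<Delta>']) (intro conjI \<phi>'E \<Delta>'H refl)
      have s: "?P (SOME r. ?P r)" using p0 by (rule someI[where P = ?P])
      have sv: "SV (?R \<phi>' \<Delta>') = (SOME r. ?P r)" unfolding SV_def by (rule refl)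
      have "?P (SV (?R \<phi>' \<Delta>'))" by (subst sv) (rule s)
      then obtain \<phi>'' \<Delta>'' where h0: "(\<forall>t\<le>T. \<phi>'' t \<in> E t) \<and> \<Delta>'' \<in> Hstrat T K \<and> ?R \<phi>' \<Delta>' = ?R \<phi>'' \<Delta>''
        \<and> SV (?R \<phi>' \<Delta>') = (\<Sum>t\<le>T. S t (\<phi>'' t))" by (elim exE) (erule that)
      then have h: "\<forall>t\<le>T. \<phi>'' t \<in> E t" "?R \<phi>' \<Delta>' = ?R \<phi>'' \<Delta>''"
        "SV (?R \<phi>' \<Delta>') = (\<Sum>t\<le>T. S t (\<phi>'' t))"
        using h0[THEN conjunct1] h0[THEN conjunct2, THEN conjunct2, THEN conjunct1]
          h0[THEN conjunct2, THEN conjunct2, THEN conjunct2] by - assumption+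
      have "\<forall>x\<in>Omega T K. (\<Sum>t\<le>T. \<phi>'' t (x t)) = (\<Sum>t\<le>T. \<phi>' t (x t)) + Iint T (\<lambda>t y. \<Delta>' t y - \<Delta>'' t y) x"
      proof
        fix x assume x: "x \<in> Omega T K"
        have "?R \<phi>' \<Delta>' x = ?R \<phi>'' \<Delta>'' x" using h(2) by (rule fun_cong)
        then show "(\<Sum>t\<le>T. \<phi>'' t (x t)) = (\<Sum>t\<le>T. \<phi>' t (x t)) + Iint T (\<lambda>t y. \<Delta>' t y - \<Delta>'' t y) x"
          using x by (simp add: Iint_diff)
      qed
      from key[OF K0 Kcard Eadm h(1) \<phi>'E this SA] h(3) show ?thesis by simp
    qed
    have SAt: "\<forall>f\<in>E t. \<forall>\<alpha> \<beta>. S t (\<lambda>x\<in>K t. f x + \<alpha> * x + \<beta>) = S t f + \<alpha> * x0 + \<beta>"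
      if "t \<le> T" for t using SA that unfolding stock_additive_def by simp
    have cash: "SV (\<lambda>x\<in>Omega T K. v x + c) = SV v + c" if v: "v \<in> Vspace T K E" for v c
    proof -
      obtain \<phi>' \<Delta>' where r: "\<forall>t\<le>T. \<phi>' t \<in> E t" "\<Delta>' \<in> Hstrat T K" "v = ?R \<phi>' \<Delta>'"
        using v unfolding Vspace_def by blast
      define \<phi>'' where "\<phi>'' = \<phi>'(0 := (\<lambda>y\<in>K 0. \<phi>' 0 y + c))"
      have E0: "(\<lambda>y\<in>K 0. \<phi>' 0 y + c) \<in> E 0"
        using Eadm r(1) unfolding admissible_space_def by auto
      have r'': "\<forall>t\<le>T. \<phi>'' t \<in> E t" using r(1) E0 by (auto simp: \<phi>''_def)
      have "(\<lambda>x\<in>Omega T K. v x + c) = ?R \<phi>'' \<Delta>'"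
      proof
        fix x show "(\<lambda>x\<in>Omega T K. v x + c) x = ?R \<phi>'' \<Delta>' x"
        proof (cases "x \<in> Omega T K")
          case True
          then have x0K: "x 0 \<in> K 0" by (auto simp: Omega_def)
          have "(\<Sum>t\<le>T. \<phi>'' t (x t)) = (\<Sum>t\<le>T. \<phi>' t (x t) + (if t = 0 then c else 0))"
            by (rule sum.cong) (auto simp: \<phi>''_def x0K)
          also have "\<dots> = (\<Sum>t\<le>T. \<phi>' t (x t)) + c" by (simp add: sum.distrib)
          finally show ?thesis using True r(3) by simp
        qed simp
      qed
      then have "SV (\<lambda>x\<in>Omega T K. v x + c) = (\<Sum>t\<le>T. S t (\<phi>'' t))" using P1[OF r'' r(2)] by simp
      also have "\<dots> = (\<Sum>t\<le>T. S t (\<phi>' t) + (if t = 0 then c else 0))"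
      proof (rule sum.cong)
        fix t assume "t \<in> {..T}"
        show "S t (\<phi>'' t) = S t (\<phi>' t) + (if t = 0 then c else 0)"
        proof (cases "t = 0")
          case True
          have "S 0 (\<lambda>x\<in>K 0. \<phi>' 0 x + 0 * x + c) = S 0 (\<phi>' 0) + 0 * x0 + c"
            using SAt[of 0] r(1) by blast
          then show ?thesis using True by (simp add: \<phi>''_def)
        qed (simp add: \<phi>''_def)
      qed simp
      also have "\<dots> = (\<Sum>t\<le>T. S t (\<phi>' t)) + c" by (simp add: sum.distrib)
      also have "\<dots> = SV v + c" using P1[OF r(1) r(2)] r(3) by simp
      finally show ?thesis .
    qed
    have integ: "SV (\<lambda>x\<in>Omega T K. v x + Iint T \<Delta>'' x) = SV v"
      if v: "v \<in> Vspace T K E" and D: "\<Delta>'' \<in> Hstrat T K" for v \<Delta>''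
    proof -
      obtain \<phi>' \<Delta>' where r: "\<forall>t\<le>T. \<phi>' t \<in> E t" "\<Delta>' \<in> Hstrat T K" "v = ?R \<phi>' \<Delta>'"
        using v unfolding Vspace_def by blast
      have H: "(\<lambda>t y. \<Delta>' t y + \<Delta>'' t y) \<in> Hstrat T K" using Hstrat_add[OF r(2) D] .
      have "(\<lambda>x\<in>Omega T K. v x + Iint T \<Delta>'' x) = ?R \<phi>' (\<lambda>t y. \<Delta>' t y + \<Delta>'' t y)"
        using r(3) by (auto simp: Iint_add)
      then show ?thesis using P1[OF r(1) H] P1[OF r(1) r(2)] r(3) by simp
    qed
    show ?thesis
      apply (rule conjI)
       apply (rule key[OF K0 Kcard Eadm \<phi>E \<psi>E eq SA])
      apply (rule exI[of _ SV])
      apply (intro conjI allI impI ballI)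
        apply (elim conjE)
        apply (rule P1; assumption)
       apply (erule cash)
      apply (erule integ; assumption)
      done
  qed
  show ?thesis
    apply (rule conjI)
     apply (rule part1)
    apply (intro allI impI)
    apply (erule part2)
    done
qed

end
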